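(* Let $K$ be a totally real number field of degree $n$ and let $S\subseteq\mathbb{R}^n$ be a polytope of dimension $n-1$ whose vertices are images $\iota_M(\alpha)$ of elements $\alpha\in\mathcal{O}_K^+$. Suppose $S$ is contained in the hyperplane $\{x\in\mathbb{R}^n:\sum_{i=1}^n\tau_i(\delta)x_i=1\}$ for some $\delta\in\mathcal{O}_K^{\vee,+}$. Then $S\subseteq\mathcal{S}_K$.
   Context: $\tau_1,\dots,\tau_n$ are the real embeddings of $K$, $\iota_M:K\to\mathbb{R}^n$, $\alpha\mapsto(\tau_1(\alpha),\dots,\tau_n(\alpha))$, $\Lambda=\iota_M(\mathcal{O}_K)$. $\mathcal{O}_K^+$ is the set of totally positive elements of $\mathcal{O}_K$. The sail $\mathcal{S}_K$ is the boundary of the Klein polyhedron $\operatorname{Conv}(\Lambda\cap\mathbb{R}_{>0}^n)$. The codifferent is $\mathcal{O}_K^\vee=\{\delta\in K:\operatorname{Tr}_{K/\mathbb{Q}}(\delta\alpha)\in\mathbb{Z}\ \forall\alpha\in\mathcal{O}_K\}$ and $\mathcal{O}_K^{\vee,+}$ is the set of its totally positive elements. *)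

theory Defs
  imports "HOL-Analysis.Analysis" "HOL-Computational_Algebra.Polynomial"
begin

text \<open>A number field K is modelled as a subfield of the reals (a totally real
field always has a real embedding, and the statement is invariant under isomorphism).\<close>

definition real_subfield :: "real set \<Rightarrow> bool" where
  "real_subfield K \<longleftrightarrow> 0 \<in> K \<and> 1 \<in> K \<and>
     (\<forall>x\<in>K. \<forall>y\<in>K. x + y \<in> K \<and> x - y \<in> K \<and> x * y \<in> K) \<and>
     (\<forall>x\<in>K. x \<noteq> 0 \<longrightarrow> inverse x \<in> K)"

definition rat_degree :: "real set \<Rightarrow> nat \<Rightarrow> bool" where
  "rat_degree K n \<longleftrightarrow> (\<exists>b :: nat \<Rightarrow> real. (\<forall>i<n. b i \<in> K) \<and>
     (\<forall>x\<in>K. \<exists>!c :: nat \<Rightarrow> rat. (\<forall>i\<ge>n. c i = 0) \<and> x = (\<Sum>i<n. of_rat (c i) * b i)))"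

definition field_hom_on :: "real set \<Rightarrow> (real \<Rightarrow> 'b::comm_ring_1) \<Rightarrow> bool" where
  "field_hom_on K f \<longleftrightarrow> f 1 = 1 \<and>
     (\<forall>x\<in>K. \<forall>y\<in>K. f (x + y) = f x + f y \<and> f (x * y) = f x * f y)"

definition algebraic_integer :: "real \<Rightarrow> bool" where
  "algebraic_integer x \<longleftrightarrow> (\<exists>p :: int poly. lead_coeff p = 1 \<and> poly (map_poly of_int p) x = 0)"

definition ring_of_integers :: "real set \<Rightarrow> real set" where
  "ring_of_integers K = {x \<in> K. algebraic_integer x}"

definition trace_emb :: "('n::finite \<Rightarrow> real \<Rightarrow> real) \<Rightarrow> real \<Rightarrow> real" where
  "trace_emb tau x = (\<Sum>i\<in>UNIV. tau i x)"

definition totally_positive :: "('n::finite \<Rightarrow> real \<Rightarrow> real) \<Rightarrow> real set \<Rightarrow> real set" where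
  "totally_positive tau A = {x \<in> A. \<forall>i. tau i x > 0}"

definition codifferent :: "real set \<Rightarrow> ('n::finite \<Rightarrow> real \<Rightarrow> real) \<Rightarrow> real set" where
  "codifferent K tau = {d \<in> K. \<forall>a \<in> ring_of_integers K. trace_emb tau (d * a) \<in> \<int>}"

definition iota_M :: "('n::finite \<Rightarrow> real \<Rightarrow> real) \<Rightarrow> real \<Rightarrow> real ^ 'n" where
  "iota_M tau a = (\<chi> i. tau i a)"

definition sail :: "real set \<Rightarrow> ('n::finite \<Rightarrow> real \<Rightarrow> real) \<Rightarrow> (real ^ 'n) set" where
  "sail K tau = frontier (convex hull (iota_M tau ` ring_of_integers K \<inter> {x. \<forall>i. 0 < x $ i}))"

end

theory Submission
  imports Defs
begin

theorem lemma2p9: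
  fixes K :: "real set" and tau :: "'n::finite \<Rightarrow> real \<Rightarrow> real"
    and S :: "(real ^ 'n) set" and \<delta> :: real
  assumes K_field: "real_subfield K"
    and K_degree: "rat_degree K CARD('n)"
    and tau_hom: "\<And>i. field_hom_on K (tau i)"
    and tau_distinct: "\<And>i j. i \<noteq> j \<Longrightarrow> \<exists>x\<in>K. tau i x \<noteq> tau j x"
    and totally_real: "\<And>\<sigma> :: real \<Rightarrow> complex. field_hom_on K \<sigma> \<Longrightarrow>
                         \<exists>i. \<forall>x\<in>K. \<sigma> x = complex_of_real (tau i x)"
    and S_polytope: "polytope S"
    and S_dim: "aff_dim S = int CARD('n) - 1"
    and S_vertices: "\<And>v. v extreme_point_of S \<Longrightarrow>
                       v \<in> iota_M tau ` totally_positive tau (ring_of_integers K)"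
    and \<delta>_mem: "\<delta> \<in> totally_positive tau (codifferent K tau)"
    and S_hyp: "S \<subseteq> {x. (\<Sum>i\<in>UNIV. tau i \<delta> * x $ i) = 1}"
  shows "S \<subseteq> sail K tau"
proof -
  define d :: "real ^ 'n" where "d = (\<chi> i. tau i \<delta>)"
  define P where "P = iota_M tau ` ring_of_integers K \<inter> {x::real^'n. \<forall>i. 0 < x $ i}"
  define C where "C = convex hull P"
  have dpos: "\<And>i. d $ i > 0" using \<delta>_mem by (simp add: d_def totally_positive_def)
  have dK: "\<delta> \<in> K" "\<forall>a \<in> ring_of_integers K. trace_emb tau (\<delta> * a) \<in> \<int>"
    using \<delta>_mem by (auto simp: totally_positive_def codifferent_def)
  have Lx: "\<And>x. d \<bullet> x = (\<Sum>i\<in>UNIV. tau i \<delta> * x $ i)"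
    by (simp add: d_def inner_vec_def)
  have P_ge: "d \<bullet> y \<ge> 1" if yP: "y \<in> P" for y
  proof -
    obtain a where a: "a \<in> ring_of_integers K" "y = iota_M tau a" "\<forall>i. 0 < y $ i"
      using yP unfolding P_def by blast
    have aK: "a \<in> K" using a(1) by (simp add: ring_of_integers_def)
    have ypos: "\<And>i. tau i a > 0" using a(2,3) by (simp add: iota_M_def)
    have "trace_emb tau (\<delta> * a) = (\<Sum>i\<in>UNIV. tau i \<delta> * tau i a)"
      unfolding trace_emb_def using tau_hom dK(1) aK by (simp add: field_hom_on_def)
    also have "\<dots> = d \<bullet> y" using a(2) by (simp add: Lx iota_M_def)
    finally have tr: "d \<bullet> y = trace_emb tau (\<delta> * a)" by simp
    have pos: "d \<bullet> y > 0" unfolding Lx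
      using dpos ypos a(2) by (intro sum_pos) (auto simp: d_def iota_M_def)
    have "d \<bullet> y \<in> \<int>" using tr dK(2) a(1) by simp
    then obtain k where k: "d \<bullet> y = of_int k" by (auto elim: Ints_cases)
    with pos have "k \<ge> 1" by simp
    with k show ?thesis by simp
  qed
  have C_ge: "C \<subseteq> {y. d \<bullet> y \<ge> 1}"
    unfolding C_def
    by (rule hull_minimal) (use P_ge convex_halfspace_ge in blast)+
  have SC: "S \<subseteq> C"
  proof -
    have "S = convex hull {x. x extreme_point_of S}"
      by (rule Krein_Milman_Minkowski) (use S_polytope polytope_imp_compact polytope_imp_convex in auto)
    also have "\<dots> \<subseteq> C" unfolding C_def
    proof (rule hull_mono, safe)
      fix v assume "v extreme_point_of S"
      from S_vertices[OF this] obtain a where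
        "a \<in> totally_positive tau (ring_of_integers K)" "v = iota_M tau a" by auto
      then show "v \<in> P" by (auto simp: P_def totally_positive_def iota_M_def)
    qed
    finally show ?thesis .
  qed
  have d0: "d \<noteq> 0" using dpos[of undefined] by auto
  show ?thesis
  proof
    fix x assume xS: "x \<in> S"
    have xC: "x \<in> C" using xS SC by auto
    have Lx1: "d \<bullet> x = 1" using xS S_hyp Lx by auto
    have "x \<notin> interior C"
    proof
      assume "x \<in> interior C"
      then obtain e where e: "e > 0" "ball x e \<subseteq> C" using mem_interior by blast
      define y where "y = x - (e / 2 / norm d) *\<^sub>R d"
      have nd: "norm d > 0" using d0 by simp
      have "dist x y = e / 2" using nd e by (simp add: y_def dist_norm)
      then have "y \<in> C" using e by auto
      then have "d \<bullet> y \<ge> 1" using C_ge by auto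
      moreover have "d \<bullet> y = 1 - e / 2 * norm d"
        using nd Lx1 by (simp add: y_def inner_diff_right power2_norm_eq_inner[symmetric] power2_eq_square)
      moreover have "e / 2 * norm d > 0" using nd e by simp
      ultimately show False by linarith
    qed
    then show "x \<in> sail K tau"
    proof -
      have "x \<in> closure C - interior C" using xC closure_subset \<open>x \<notin> interior C\<close> by blast
      then show ?thesis unfolding sail_def frontier_def C_def P_def .
    qed
  qed
qed

end
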